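(* Mumbling $H_\mu$ with unique mumbling and basis $\mathit{LTL}$ is at least as expressive as stuttering $H_\mu$ with unique stuttering and basis $\mathit{LTL}$; and mumbling $H_\mu$ with unique mumbling and full basis is at least as expressive as stuttering $H_\mu$ with unique stuttering and full basis.
   Context: Fix a finite set $\mathit{AP}$. A trace is an infinite sequence $P_0m_0P_1m_1\dots$ with $P_i\subseteq\mathit{AP}$, $m_i\in\{\mathit{int},\mathit{call},\mathit{ret}\}$; $\mathit{tr}(i)=P_i$. Successor functions: $\mathit{succ}_\mathsf{g}(\mathit{tr},i)=i+1$; $\mathit{succ}_\mathsf{a}(\mathit{tr},i)=i+1$ if $m_i=\mathit{int}$, and if $m_i=\mathit{call}$ the least $j>i$ such that among $m_i,\dots,m_{j-1}$ the numbers of $\mathit{call}$ and $\mathit{ret}$ coincide (undefined if none), undefined if $m_i=\mathit{ret}$; $\mathit{succ}_\mathsf{c}(\mathit{tr},i)$ the largest $j<i$ with $m_j=\mathit{call}$ such that among $m_{j+1},\dots,m_{i-1}$ the numbers of $\mathit{call}$ and $\mathit{ret}$ coincide (undefined if none). Mumbling $H_\mu$: trace formulae $\delta ::= \mathit{ap}\mid Y\mid\delta\lor\delta\mid\lnot\delta\mid\bigcirc^\mathsf{f}\delta\mid\mu Y.\delta$ ($\mathsf{f}\in\{\mathsf{g},\mathsf{a},\mathsf{c}\}$); multitrace formulae $\psi ::= [\delta]_\pi\mid X\mid\psi\lor\psi\mid\lnot\psi\mid\bigcirc^\Delta\psi\mid\mu X.\psi$ with $\Delta$ mapping trace variables to trace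 formulae; hyperproperty formulae $\varphi ::= \exists\pi.\varphi\mid\forall\pi.\varphi\mid\psi$; fixpoint variables occur positively; closed = all variables bound. Trace semantics $\llbracket\delta\rrbracket^{\mathit{tr}}_{\mathcal{V}}\subseteq\mathbb{N}_0$: $\mathit{ap}\mapsto\{i\mid\mathit{ap}\in\mathit{tr}(i)\}$, $Y\mapsto\mathcal{V}(Y)$, union, complement, $\bigcirc^\mathsf{f}\delta\mapsto\{i\mid\mathit{succ}_\mathsf{f}(\mathit{tr},i)$ defined and in $\llbracket\delta\rrbracket\}$, $\mu Y.\delta\mapsto\bigcap\{I\mid\llbracket\delta\rrbracket_{\mathcal{V}[Y\mapsto I]}\subseteq I\}$. $\mathit{succ}_\delta(\mathit{tr},i)=\min\{j>i\mid j\in\llbracket\delta\rrbracket^{\mathit{tr}}\}$ if nonempty, else $i+1$; $\mathit{succ}_\Delta(\Pi,v)$ componentwise for a trace assignment $\Pi$ on $\pi_1,\dots,\pi_n$. $\llbracket\psi\rrbracket^\Pi_{\mathcal{W}}\subseteq\mathbb{N}_0^n$: $[\delta]_{\pi_j}\mapsto\{v\mid v_j\in\llbracket\delta\rrbracket^{\Pi(\pi_j)}\}$, $X\mapsto\mathcal{W}(X)$, Boolean as usual, $\bigcirc^\Delta\psi\mapsto\{v\mid\mathit{succ}_\Delta(\Pi,v)\in\llbracket\psi\rrbracket\}$, $\mu X$ least fixpoint. $\Pi\models_\mathcal{T}\exists\pi.\varphi$ iff some $\mathit{tr}\in\mathcal{T}$ gives $\Pi[\pi\mapsto\mathit{tr}]\models_\mathcal{T}\varphi$;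 $\forall$ for all; $\Pi\models_\mathcal{T}\psi$ iff $(0,\dots,0)\in\llbracket\psi\rrbracket^\Pi$. For closed $\varphi$ and a set of traces $\mathcal{T}$, $\mathcal{T}\models\varphi$ iff the empty assignment satisfies $\varphi$ over $\mathcal{T}$. Stuttering $H_\mu$ is identical except that multitrace next operators are $\bigcirc^\Gamma\psi$ with $\Gamma$ mapping each trace variable to a finite set of trace formulae; for a finite set $\gamma$, $\mathit{succ}_\gamma(\mathit{tr},i)=\min\{j>i\mid$ for some $\delta\in\gamma$: $i\in\llbracket\delta\rrbracket^{\mathit{tr}}\not\Leftrightarrow j\in\llbracket\delta\rrbracket^{\mathit{tr}}\}$ if nonempty, else $i+1$; $\mathit{succ}_\Gamma$ componentwise and $\llbracket\bigcirc^\Gamma\psi\rrbracket=\{v\mid\mathit{succ}_\Gamma(\Pi,v)\in\llbracket\psi\rrbracket\}$. Fragments: unique mumbling (resp. unique stuttering) means all multitrace next operators of the formula use the same $\Delta$ (resp. $\Gamma$). The base formulae of $\varphi$ are the trace formulae occurring in tests $[\delta]_\pi$ or as values $\Delta(\pi)$ (resp. as elements of sets $\Gamma(\pi)$); the formula has basis $\mathcal{B}$ if all its base formulae lie in $\mathcal{B}$; full basis means no restriction. Basis $\mathit{LTL}$ is the set of LTL formulae: trace formulae built from atomic propositions using $\lnot$, $\lor$, $\bigcirc^\mathsf{g}$ and $\delta_1\,\mathcal{U}\,\delta_2:=\mu Y.(\delta_2\lor(\delta_1\land\bigcirc^\mathsf{g}Y))$ as the only fixpoint construct. Logic $L_1$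 is at least as expressive as logic $L_2$ if for every closed hyperproperty formula $\varphi$ of $L_2$ there is a closed hyperproperty formula $\varphi'$ of $L_1$ such that for all sets of traces $\mathcal{T}$, $\mathcal{T}\models\varphi$ iff $\mathcal{T}\models\varphi'$. *)

theory Defs
  imports Main
begin

section \<open>Traces\<close>

datatype mode = MInt | MCall | MRet

text \<open>A trace P0 m0 P1 m1 ...: the pair of the proposition sequence and the move sequence.\<close>
type_synonym 'ap trace = "(nat \<Rightarrow> 'ap set) \<times> (nat \<Rightarrow> mode)"

definition props :: "'ap trace \<Rightarrow> nat \<Rightarrow> 'ap set" where
  "props tr = fst tr"

definition moves :: "'ap trace \<Rightarrow> nat \<Rightarrow> mode" where
  "moves tr = snd tr"

definition cnt :: "'ap trace \<Rightarrow> mode \<Rightarrow> nat \<Rightarrow> nat \<Rightarrow> nat" where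
  "cnt tr c i j = card {k. i \<le> k \<and> k < j \<and> moves tr k = c}"

definition balanced :: "'ap trace \<Rightarrow> nat \<Rightarrow> nat \<Rightarrow> bool" where
  "balanced tr i j \<longleftrightarrow> cnt tr MCall i j = cnt tr MRet i j"

datatype succ_kind = SG | SA | SC

fun succ_f :: "succ_kind \<Rightarrow> 'ap trace \<Rightarrow> nat \<Rightarrow> nat option" where
  "succ_f SG tr i = Some (Suc i)"
| "succ_f SA tr i =
     (case moves tr i of
        MInt \<Rightarrow> Some (Suc i)
      | MCall \<Rightarrow> (if \<exists>j>i. balanced tr i j then Some (LEAST j. j > i \<and> balanced tr i j) else None)
      | MRet \<Rightarrow> None)"
| "succ_f SC tr i =
     (if \<exists>j<i. moves tr j = MCall \<and> balanced tr (Suc j) i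
      then Some (GREATEST j. j < i \<and> moves tr j = MCall \<and> balanced tr (Suc j) i)
      else None)"

section \<open>Trace formulae\<close>

datatype 'ap tform =
    TAP 'ap
  | TVar nat
  | TOr "'ap tform" "'ap tform"
  | TNot "'ap tform"
  | TNext succ_kind "'ap tform"
  | TMu nat "'ap tform"

fun tsem :: "'ap trace \<Rightarrow> (nat \<Rightarrow> nat set) \<Rightarrow> 'ap tform \<Rightarrow> nat set" where
  "tsem tr V (TAP a) = {i. a \<in> props tr i}"
| "tsem tr V (TVar Y) = V Y"
| "tsem tr V (TOr d1 d2) = tsem tr V d1 \<union> tsem tr V d2"
| "tsem tr V (TNot d) = - tsem tr V d"
| "tsem tr V (TNext f d) = {i. \<exists>j. succ_f f tr i = Some j \<and> j \<in> tsem tr V d}"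
| "tsem tr V (TMu Y d) = \<Inter>{I. tsem tr (V(Y := I)) d \<subseteq> I}"

text \<open>semantics of a closed trace formula (valuation irrelevant)\<close>
definition tsem0 :: "'ap trace \<Rightarrow> 'ap tform \<Rightarrow> nat set" where
  "tsem0 tr d = tsem tr (\<lambda>_. {}) d"

fun tfree :: "'ap tform \<Rightarrow> nat set" where
  "tfree (TAP a) = {}"
| "tfree (TVar Y) = {Y}"
| "tfree (TOr d1 d2) = tfree d1 \<union> tfree d2"
| "tfree (TNot d) = tfree d"
| "tfree (TNext f d) = tfree d"
| "tfree (TMu Y d) = tfree d - {Y}"

text \<open>tpos Y p d: every free occurrence of Y in d is under an even (p = True)
  resp. odd (p = False) number of negations\<close>
fun tpos :: "nat \<Rightarrow> bool \<Rightarrow> 'ap tform \<Rightarrow> bool" where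
  "tpos Y p (TAP a) = True"
| "tpos Y p (TVar X) = (X = Y \<longrightarrow> p)"
| "tpos Y p (TOr d1 d2) = (tpos Y p d1 \<and> tpos Y p d2)"
| "tpos Y p (TNot d) = tpos Y (\<not> p) d"
| "tpos Y p (TNext f d) = tpos Y p d"
| "tpos Y p (TMu X d) = (X = Y \<or> tpos Y p d)"

fun twf :: "'ap tform \<Rightarrow> bool" where
  "twf (TAP a) = True"
| "twf (TVar X) = True"
| "twf (TOr d1 d2) = (twf d1 \<and> twf d2)"
| "twf (TNot d) = twf d"
| "twf (TNext f d) = twf d"
| "twf (TMu X d) = (tpos X True d \<and> twf d)"

definition tclosed_wf :: "'ap tform \<Rightarrow> bool" where
  "tclosed_wf d \<longleftrightarrow> tfree d = {} \<and> twf d"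

definition TAnd :: "'ap tform \<Rightarrow> 'ap tform \<Rightarrow> 'ap tform" where
  "TAnd d1 d2 = TNot (TOr (TNot d1) (TNot d2))"

text \<open>d1 U d2 := mu Y. (d2 or (d1 and next_g Y)); LTL formulas are closed, so any Y works\<close>
definition TUntil :: "nat \<Rightarrow> 'ap tform \<Rightarrow> 'ap tform \<Rightarrow> 'ap tform" where
  "TUntil Y d1 d2 = TMu Y (TOr d2 (TAnd d1 (TNext SG (TVar Y))))"

inductive is_ltl :: "'ap tform \<Rightarrow> bool" where
  "is_ltl (TAP a)"
| "is_ltl d \<Longrightarrow> is_ltl (TNot d)"
| "is_ltl d1 \<Longrightarrow> is_ltl d2 \<Longrightarrow> is_ltl (TOr d1 d2)"
| "is_ltl d \<Longrightarrow> is_ltl (TNext SG d)"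
| "is_ltl d1 \<Longrightarrow> is_ltl d2 \<Longrightarrow> is_ltl (TUntil Y d1 d2)"

section \<open>Multitrace and hyperproperty formulae\<close>

text \<open>Generic in the annotation 'd of the multitrace next operator:
  mumbling: 'd = nat \<Rightarrow> 'ap tform (Delta), stuttering: 'd = nat \<Rightarrow> 'ap tform set (Gamma).\<close>
datatype ('ap, 'd) mform =
    MTest "'ap tform" nat
  | MVar nat
  | MOr "('ap, 'd) mform" "('ap, 'd) mform"
  | MNot "('ap, 'd) mform"
  | MNext 'd "('ap, 'd) mform"
  | MMu nat "('ap, 'd) mform"

datatype ('ap, 'd) hform =
    HEx nat "('ap, 'd) hform"
  | HAll nat "('ap, 'd) hform"
  | HBody "('ap, 'd) mform"

type_synonym 'ap tassign = "nat \<Rightarrow> 'ap trace"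
type_synonym pos = "nat \<Rightarrow> nat"

fun msem :: "('d \<Rightarrow> 'ap tassign \<Rightarrow> pos \<Rightarrow> pos) \<Rightarrow> 'ap tassign \<Rightarrow> (nat \<Rightarrow> pos set)
             \<Rightarrow> ('ap, 'd) mform \<Rightarrow> pos set" where
  "msem nx P W (MTest d p) = {v. v p \<in> tsem0 (P p) d}"
| "msem nx P W (MVar X) = W X"
| "msem nx P W (MOr a b) = msem nx P W a \<union> msem nx P W b"
| "msem nx P W (MNot a) = - msem nx P W a"
| "msem nx P W (MNext D a) = {v. nx D P v \<in> msem nx P W a}"
| "msem nx P W (MMu X a) = \<Inter>{I. msem nx P (W(X := I)) a \<subseteq> I}"

fun hsat :: "('d \<Rightarrow> 'ap tassign \<Rightarrow> pos \<Rightarrow> pos) \<Rightarrow> 'ap trace set \<Rightarrow> 'ap tassign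
             \<Rightarrow> ('ap, 'd) hform \<Rightarrow> bool" where
  "hsat nx T P (HEx p f) = (\<exists>tr\<in>T. hsat nx T (P(p := tr)) f)"
| "hsat nx T P (HAll p f) = (\<forall>tr\<in>T. hsat nx T (P(p := tr)) f)"
| "hsat nx T P (HBody a) = ((\<lambda>_. 0) \<in> msem nx P (\<lambda>_. {}) a)"

text \<open>T |= phi for closed phi: evaluated under the empty assignment
  (for closed formulas the initial assignment is irrelevant)\<close>
definition hmodels :: "('d \<Rightarrow> 'ap tassign \<Rightarrow> pos \<Rightarrow> pos) \<Rightarrow> 'ap trace set \<Rightarrow> ('ap, 'd) hform \<Rightarrow> bool" where
  "hmodels nx T f = hsat nx T (\<lambda>_. undefined) f"

subsection \<open>Successor functions for the two kinds of next operators\<close>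

definition succ_delta :: "'ap trace \<Rightarrow> nat \<Rightarrow> 'ap tform \<Rightarrow> nat" where
  "succ_delta tr i d =
     (if {j. j > i \<and> j \<in> tsem0 tr d} \<noteq> {} then (LEAST j. j > i \<and> j \<in> tsem0 tr d) else Suc i)"

definition succ_gamma :: "'ap trace \<Rightarrow> nat \<Rightarrow> 'ap tform set \<Rightarrow> nat" where
  "succ_gamma tr i g =
     (let S = {j. j > i \<and> (\<exists>d\<in>g. (i \<in> tsem0 tr d) \<noteq> (j \<in> tsem0 tr d))}
      in if S \<noteq> {} then (LEAST j. j \<in> S) else Suc i)"

definition mumble_next :: "(nat \<Rightarrow> 'ap tform) \<Rightarrow> 'ap tassign \<Rightarrow> pos \<Rightarrow> pos" where
  "mumble_next D P v = (\<lambda>p. succ_delta (P p) (v p) (D p))"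

definition stutter_next :: "(nat \<Rightarrow> 'ap tform set) \<Rightarrow> 'ap tassign \<Rightarrow> pos \<Rightarrow> pos" where
  "stutter_next G P v = (\<lambda>p. succ_gamma (P p) (v p) (G p))"

fun mfree :: "('ap, 'd) mform \<Rightarrow> nat set" where
  "mfree (MTest d p) = {}"
| "mfree (MVar X) = {X}"
| "mfree (MOr a b) = mfree a \<union> mfree b"
| "mfree (MNot a) = mfree a"
| "mfree (MNext D a) = mfree a"
| "mfree (MMu X a) = mfree a - {X}"

fun mpos :: "nat \<Rightarrow> bool \<Rightarrow> ('ap, 'd) mform \<Rightarrow> bool" where
  "mpos X p (MTest d q) = True"
| "mpos X p (MVar Z) = (Z = X \<longrightarrow> p)"
| "mpos X p (MOr a b) = (mpos X p a \<and> mpos X p b)"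
| "mpos X p (MNot a) = mpos X (\<not> p) a"
| "mpos X p (MNext D a) = mpos X p a"
| "mpos X p (MMu Z a) = (Z = X \<or> mpos X p a)"

fun mwf :: "('ap, 'd) mform \<Rightarrow> bool" where
  "mwf (MTest d p) = True"
| "mwf (MVar X) = True"
| "mwf (MOr a b) = (mwf a \<and> mwf b)"
| "mwf (MNot a) = mwf a"
| "mwf (MNext D a) = mwf a"
| "mwf (MMu X a) = (mpos X True a \<and> mwf a)"

fun mtests :: "('ap, 'd) mform \<Rightarrow> 'ap tform set" where
  "mtests (MTest d p) = {d}"
| "mtests (MVar X) = {}"
| "mtests (MOr a b) = mtests a \<union> mtests b"
| "mtests (MNot a) = mtests a"
| "mtests (MNext D a) = mtests a"
| "mtests (MMu X a) = mtests a"

fun mtvars :: "('ap, 'd) mform \<Rightarrow> nat set" where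
  "mtvars (MTest d p) = {p}"
| "mtvars (MVar X) = {}"
| "mtvars (MOr a b) = mtvars a \<union> mtvars b"
| "mtvars (MNot a) = mtvars a"
| "mtvars (MNext D a) = mtvars a"
| "mtvars (MMu X a) = mtvars a"

fun mnexts :: "('ap, 'd) mform \<Rightarrow> 'd set" where
  "mnexts (MTest d p) = {}"
| "mnexts (MVar X) = {}"
| "mnexts (MOr a b) = mnexts a \<union> mnexts b"
| "mnexts (MNot a) = mnexts a"
| "mnexts (MNext D a) = insert D (mnexts a)"
| "mnexts (MMu X a) = mnexts a"

fun hbody :: "('ap, 'd) hform \<Rightarrow> ('ap, 'd) mform" where
  "hbody (HEx p f) = hbody f"
| "hbody (HAll p f) = hbody f"
| "hbody (HBody a) = a"

text \<open>quantified trace variables (the trace variables on which the annotations of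
  next operators are relevant)\<close>
fun hqvars :: "('ap, 'd) hform \<Rightarrow> nat set" where
  "hqvars (HEx p f) = insert p (hqvars f)"
| "hqvars (HAll p f) = insert p (hqvars f)"
| "hqvars (HBody a) = {}"

definition ann_mum :: "('ap, nat \<Rightarrow> 'ap tform) hform \<Rightarrow> 'ap tform set" where
  "ann_mum f = {D p | D p. D \<in> mnexts (hbody f) \<and> p \<in> hqvars f}"

definition ann_stut :: "('ap, nat \<Rightarrow> 'ap tform set) hform \<Rightarrow> 'ap tform set" where
  "ann_stut f = \<Union>{G p | G p. G \<in> mnexts (hbody f) \<and> p \<in> hqvars f}"

definition base_mum :: "('ap, nat \<Rightarrow> 'ap tform) hform \<Rightarrow> 'ap tform set" where
  "base_mum f = mtests (hbody f) \<union> ann_mum f"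

definition base_stut :: "('ap, nat \<Rightarrow> 'ap tform set) hform \<Rightarrow> 'ap tform set" where
  "base_stut f = mtests (hbody f) \<union> ann_stut f"

definition closed_mum :: "('ap, nat \<Rightarrow> 'ap tform) hform \<Rightarrow> bool" where
  "closed_mum f \<longleftrightarrow> mfree (hbody f) = {} \<and> mwf (hbody f) \<and> mtvars (hbody f) \<subseteq> hqvars f
     \<and> (\<forall>d\<in>base_mum f. tclosed_wf d)"

definition closed_stut :: "('ap, nat \<Rightarrow> 'ap tform set) hform \<Rightarrow> bool" where
  "closed_stut f \<longleftrightarrow> mfree (hbody f) = {} \<and> mwf (hbody f) \<and> mtvars (hbody f) \<subseteq> hqvars f
     \<and> (\<forall>G\<in>mnexts (hbody f). \<forall>p\<in>hqvars f. finite (G p))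
     \<and> (\<forall>d\<in>base_stut f. tclosed_wf d)"

definition unique_ann :: "('ap, nat \<Rightarrow> 'x) hform \<Rightarrow> bool" where
  "unique_ann f \<longleftrightarrow> (\<forall>D1\<in>mnexts (hbody f). \<forall>D2\<in>mnexts (hbody f). \<forall>p\<in>hqvars f. D1 p = D2 p)"

definition frag_mum :: "('ap tform \<Rightarrow> bool) \<Rightarrow> ('ap, nat \<Rightarrow> 'ap tform) hform \<Rightarrow> bool" where
  "frag_mum B f \<longleftrightarrow> closed_mum f \<and> unique_ann f \<and> (\<forall>d\<in>base_mum f. B d)"

definition frag_stut :: "('ap tform \<Rightarrow> bool) \<Rightarrow> ('ap, nat \<Rightarrow> 'ap tform set) hform \<Rightarrow> bool" where
  "frag_stut B f \<longleftrightarrow> closed_stut f \<and> unique_ann f \<and> (\<forall>d\<in>base_stut f. B d)"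

definition at_least_as_expressive ::
  "('f1 \<Rightarrow> bool) \<Rightarrow> ('t set \<Rightarrow> 'f1 \<Rightarrow> bool) \<Rightarrow> ('f2 \<Rightarrow> bool) \<Rightarrow> ('t set \<Rightarrow> 'f2 \<Rightarrow> bool) \<Rightarrow> bool" where
  "at_least_as_expressive L1 sat1 L2 sat2 \<longleftrightarrow>
     (\<forall>f. L2 f \<longrightarrow> (\<exists>f'. L1 f' \<and> (\<forall>T. sat2 T f \<longleftrightarrow> sat1 T f')))"

end

theory Submission
  imports Defs
begin


definition ttrue :: "'ap tform" where "ttrue = TOr (TAP undefined) (TNot (TAP undefined))"
definition tfalse :: "'ap tform" where "tfalse = TNot ttrue"
definition txor :: "'ap tform \<Rightarrow> 'ap tform \<Rightarrow> 'ap tform" where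
  "txor a b = TOr (TAnd a (TNot b)) (TAnd (TNot a) b)"
definition lst :: "'a set \<Rightarrow> 'a list" where "lst A = (SOME xs. set xs = A)"
definition Efl :: "'ap tform list \<Rightarrow> 'ap tform" where
  "Efl xs = foldr (\<lambda>d acc. TOr (txor d (TNext SG d)) acc) xs tfalse"
definition Ef :: "'ap tform set \<Rightarrow> 'ap tform" where "Ef G = Efl (lst G)"
definition Ff :: "'ap tform \<Rightarrow> 'ap tform" where "Ff e = TUntil 0 ttrue e"
definition Lf :: "'ap tform set \<Rightarrow> 'ap tform \<Rightarrow> 'ap tform" where
  "Lf G d = TOr (TUntil 0 (TNot (Ef G)) (TAnd (Ef G) (TNext SG d))) (TAnd (TNot (Ff (Ef G))) (TNext SG d))"
definition stayf :: "'ap tform set \<Rightarrow> 'ap tform" where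
  "stayf G = TOr (Ef G) (TNot (Ff (Ef G)))"

lemma lst: "finite A \<Longrightarrow> set (lst A) = A"
  unfolding lst_def by (metis (mono_tags) finite_list someI_ex)

lemma tsem0_simps:
  "tsem0 tr (TAP x) = {i. x \<in> props tr i}"
  "tsem0 tr (TOr a b) = tsem0 tr a \<union> tsem0 tr b"
  "tsem0 tr (TNot a) = - tsem0 tr a"
  "tsem0 tr (TNext SG a) = {i. Suc i \<in> tsem0 tr a}"
  "tsem0 tr (TAnd a b) = tsem0 tr a \<inter> tsem0 tr b"
  "tsem0 tr ttrue = UNIV" "tsem0 tr tfalse = {}"
  by (auto simp: tsem0_def TAnd_def ttrue_def tfalse_def)

lemma tsem_free: "(\<forall>Y\<in>tfree d. V Y = V' Y) \<Longrightarrow> tsem tr V d = tsem tr V' d"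
proof (induction d arbitrary: V V')
  case (TMu x d)
  have "\<And>I. tsem tr (V(x:=I)) d = tsem tr (V'(x:=I)) d"
    using TMu by (intro TMu.IH) auto
  then show ?case by simp
next
  case (TOr d1 d2)
  have "tsem tr V d1 = tsem tr V' d1" "tsem tr V d2 = tsem tr V' d2"
    using TOr by (intro TOr.IH; auto)+
  then show ?case by simp
next
  case (TNot d)
  have "tsem tr V d = tsem tr V' d" using TNot by (intro TNot.IH) auto
  then show ?case by simp
next
  case (TNext f d)
  have "tsem tr V d = tsem tr V' d" using TNext by (intro TNext.IH) auto
  then show ?case by simp
qed auto

lemma tsem_closed: "tfree d = {} \<Longrightarrow> tsem tr V d = tsem0 tr d"
  unfolding tsem0_def by (rule tsem_free) auto

lemma until_aux:
  assumes "B \<union> (A \<inter> {i. Suc i \<in> I}) \<subseteq> I" "k \<in> B"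
  shows "i \<le> k \<Longrightarrow> (\<forall>j. i \<le> j \<and> j < k \<longrightarrow> j \<in> A) \<Longrightarrow> i \<in> I"
proof (induction "k - i" arbitrary: i)
  case 0
  then have "i = k" by simp
  then show ?case using assms by auto
next
  case (Suc n)
  then have "i < k" by simp
  have "Suc i \<in> I" using Suc.prems Suc.hyps(2) by (intro Suc.hyps(1)) auto
  moreover have "i \<in> A" using Suc.prems \<open>i < k\<close> by auto
  ultimately show ?case using assms by auto
qed

lemma tsem0_until:
  assumes "tfree a = {}" "tfree b = {}"
  shows "tsem0 tr (TUntil Y a b) =
    {i. \<exists>k\<ge>i. k \<in> tsem0 tr b \<and> (\<forall>j. i \<le> j \<and> j < k \<longrightarrow> j \<in> tsem0 tr a)}"
proof -
  let ?A = "tsem0 tr a" and ?B = "tsem0 tr b"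
  have F: "\<And>I. tsem tr ((\<lambda>_. {})(Y:=I)) (TOr b (TAnd a (TNext SG (TVar Y)))) = ?B \<union> (?A \<inter> {i. Suc i \<in> I})"
    using assms by (auto simp: TAnd_def tsem_closed)
  have E: "tsem0 tr (TUntil Y a b) = \<Inter>{I. ?B \<union> (?A \<inter> {i. Suc i \<in> I}) \<subseteq> I}"
    by (simp only: tsem0_def TUntil_def tsem.simps(6) F[unfolded tsem0_def])
  let ?U = "{i. \<exists>k\<ge>i. k \<in> ?B \<and> (\<forall>j. i \<le> j \<and> j < k \<longrightarrow> j \<in> ?A)}"
  have "?B \<union> (?A \<inter> {i. Suc i \<in> ?U}) \<subseteq> ?U"
  proof
    fix i assume "i \<in> ?B \<union> (?A \<inter> {i. Suc i \<in> ?U})"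
    then show "i \<in> ?U"
    proof
      assume "i \<in> ?B" then show ?thesis by auto
    next
      assume "i \<in> ?A \<inter> {i. Suc i \<in> ?U}"
      then obtain k where "k \<ge> Suc i" "k \<in> ?B" "\<forall>j. Suc i \<le> j \<and> j < k \<longrightarrow> j \<in> ?A" "i \<in> ?A" by auto
      have "\<forall>j. i \<le> j \<and> j < k \<longrightarrow> j \<in> ?A"
      proof (intro allI impI)
        fix j assume "i \<le> j \<and> j < k"
        then show "j \<in> ?A" using \<open>i \<in> ?A\<close> \<open>\<forall>j. Suc i \<le> j \<and> j < k \<longrightarrow> j \<in> ?A\<close>
          by (cases "j = i") auto
      qed
      moreover have "i \<le> k" using \<open>k \<ge> Suc i\<close> by simp
      ultimately show ?thesis using \<open>k \<in> ?B\<close> by blast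
    qed
  qed
  then have 1: "\<Inter>{I. ?B \<union> (?A \<inter> {i. Suc i \<in> I}) \<subseteq> I} \<subseteq> ?U"
    by (intro Inter_lower) simp
  have 2: "?U \<subseteq> \<Inter>{I. ?B \<union> (?A \<inter> {i. Suc i \<in> I}) \<subseteq> I}"
  proof (rule Inter_greatest)
    fix I assume "I \<in> {I. ?B \<union> (?A \<inter> {i. Suc i \<in> I}) \<subseteq> I}"
    then have I: "?B \<union> (?A \<inter> {i. Suc i \<in> I}) \<subseteq> I" by simp
    show "?U \<subseteq> I"
    proof
      fix i assume "i \<in> ?U"
      then obtain k where "k \<ge> i" "k \<in> ?B" "\<forall>j. i \<le> j \<and> j < k \<longrightarrow> j \<in> ?A" by blast
      then show "i \<in> I" using until_aux[OF I \<open>k \<in> ?B\<close>] by blast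
    qed
  qed
  show ?thesis unfolding E using 1 2 by (rule equalityI)
qed

definition evs :: "'ap trace \<Rightarrow> 'ap tform set \<Rightarrow> nat set" where
  "evs tr G = {k. \<exists>d\<in>G. (k \<in> tsem0 tr d) \<noteq> (Suc k \<in> tsem0 tr d)}"

lemma tsem0_Efl: "tsem0 tr (Efl xs) = evs tr (set xs)"
  by (induction xs) (auto simp: Efl_def evs_def txor_def tsem0_simps)

lemma tsem0_Ef: "finite G \<Longrightarrow> tsem0 tr (Ef G) = evs tr G"
  by (simp add: Ef_def tsem0_Efl lst)

lemma chain:
  "(\<forall>m. i \<le> m \<and> m < j \<longrightarrow> m \<notin> evs tr G) \<Longrightarrow> i \<le> j \<Longrightarrow> d \<in> G \<Longrightarrow>
    (i \<in> tsem0 tr d \<longleftrightarrow> j \<in> tsem0 tr d)"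
proof (induction j)
  case 0 then show ?case by simp
next
  case (Suc j)
  show ?case
  proof (cases "i = Suc j")
    case False
    then have "i \<le> j" using Suc.prems by simp
    then have "i \<in> tsem0 tr d \<longleftrightarrow> j \<in> tsem0 tr d" using Suc by auto
    moreover have "j \<notin> evs tr G" using Suc.prems \<open>i \<le> j\<close> by auto
    ultimately show ?thesis using Suc.prems(3) by (auto simp: evs_def)
  qed simp
qed

lemma succ_gamma_char:
  "succ_gamma tr i G = (if \<exists>k\<ge>i. k \<in> evs tr G then Suc (LEAST k. i \<le> k \<and> k \<in> evs tr G) else Suc i)"
proof -
  define S where "S = {j. j > i \<and> (\<exists>d\<in>G. (i \<in> tsem0 tr d) \<noteq> (j \<in> tsem0 tr d))}"
  have sg: "succ_gamma tr i G = (if S \<noteq> {} then (LEAST j. j \<in> S) else Suc i)"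
    by (simp only: succ_gamma_def S_def Let_def)
  show ?thesis
  proof (cases "\<exists>k\<ge>i. k \<in> evs tr G")
    case True
    define k0 where "k0 = (LEAST k. i \<le> k \<and> k \<in> evs tr G)"
    have k0: "i \<le> k0" "k0 \<in> evs tr G" using LeastI_ex[OF True] unfolding k0_def by auto
    have below: "\<forall>m. i \<le> m \<and> m < k0 \<longrightarrow> m \<notin> evs tr G"
      unfolding k0_def using not_less_Least by blast
    have same: "\<And>d. d \<in> G \<Longrightarrow> (i \<in> tsem0 tr d \<longleftrightarrow> k0 \<in> tsem0 tr d)"
      using chain[OF below k0(1)] by blast
    have inS: "Suc k0 \<in> S"
      using k0 same unfolding S_def evs_def by auto
    have least: "\<And>j. j \<in> S \<Longrightarrow> Suc k0 \<le> j"
    proof (rule ccontr)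
      fix j assume "j \<in> S" "\<not> Suc k0 \<le> j"
      then have "j \<le> k0" "i \<le> j" by (auto simp: S_def)
      then have "\<forall>m. i \<le> m \<and> m < j \<longrightarrow> m \<notin> evs tr G" using below by auto
      then show False using chain[of i j] \<open>j \<in> S\<close> \<open>i \<le> j\<close> unfolding S_def by blast
    qed
    have "(LEAST j. j \<in> S) = Suc k0" by (rule Least_equality) (use inS least in auto)
    then show ?thesis using sg inS True k0_def by auto
  next
    case False
    have "S = {}"
    proof (rule ccontr)
      assume "S \<noteq> {}"
      then obtain j where "j \<in> S" by auto
      then have "i \<le> j" by (auto simp: S_def)
      have "\<forall>m. i \<le> m \<and> m < j \<longrightarrow> m \<notin> evs tr G" using False by auto
      then show False using chain[of i j] \<open>j \<in> S\<close> \<open>i \<le> j\<close> unfolding S_def by blast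
    qed
    then show ?thesis using sg False by auto
  qed
qed

lemma succ_gamma_gt: "i < succ_gamma tr i G"
proof -
  have "\<exists>k\<ge>i. k \<in> evs tr G \<Longrightarrow> i \<le> (LEAST k. i \<le> k \<and> k \<in> evs tr G)"
    by (metis (mono_tags, lifting) LeastI_ex)
  then show ?thesis by (auto simp: succ_gamma_char less_Suc_eq_le)
qed

lemma succ_delta_Ef: "finite G \<Longrightarrow> Suc (succ_delta tr w (Ef G)) = succ_gamma tr (Suc w) G"
  by (auto simp add: succ_delta_def succ_gamma_char tsem0_Ef Suc_le_eq)

lemma tfree_Efl: "\<forall>e\<in>set xs. tfree e = {} \<Longrightarrow> tfree (Efl xs) = {}"
  by (induction xs) (auto simp: Efl_def txor_def TAnd_def tfalse_def ttrue_def)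

lemma tfree_Ef: "finite G \<Longrightarrow> \<forall>e\<in>G. tfree e = {} \<Longrightarrow> tfree (Ef G) = {}"
  by (simp add: Ef_def tfree_Efl lst)

lemma tfree_until: "tfree (TUntil Y a b) = (tfree a \<union> tfree b) - {Y}"
  by (auto simp: TUntil_def TAnd_def)

lemma tsem0_Ff: "tfree e = {} \<Longrightarrow> tsem0 tr (Ff e) = {i. \<exists>k\<ge>i. k \<in> tsem0 tr e}"
  unfolding Ff_def by (subst tsem0_until) (auto simp: ttrue_def tsem0_simps[unfolded ttrue_def])

lemma tsem0_Lf:
  assumes "finite G" "\<forall>e\<in>G. tfree e = {}" "tfree d = {}"
  shows "tsem0 tr (Lf G d) = {i. succ_gamma tr i G \<in> tsem0 tr d}"
proof -
  have fe: "tfree (Ef G) = {}" using tfree_Ef assms by blast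
  have U: "tsem0 tr (TUntil 0 (TNot (Ef G)) (TAnd (Ef G) (TNext SG d))) =
     {i. \<exists>k\<ge>i. (k \<in> evs tr G \<and> Suc k \<in> tsem0 tr d) \<and> (\<forall>j. i \<le> j \<and> j < k \<longrightarrow> j \<notin> evs tr G)}"
    using fe assms by (subst tsem0_until) (auto simp: TAnd_def tsem0_simps tsem0_Ef)
  have FF: "tsem0 tr (Ff (Ef G)) = {i. \<exists>k\<ge>i. k \<in> evs tr G}"
    using fe assms by (simp add: tsem0_Ff tsem0_Ef)
  show ?thesis
  proof (intro set_eqI)
    fix i
    show "i \<in> tsem0 tr (Lf G d) \<longleftrightarrow> i \<in> {i. succ_gamma tr i G \<in> tsem0 tr d}"
    proof (cases "\<exists>k\<ge>i. k \<in> evs tr G")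
      case True
      define k0 where "k0 = (LEAST k. i \<le> k \<and> k \<in> evs tr G)"
      have k0: "i \<le> k0" "k0 \<in> evs tr G" using LeastI_ex[OF True] unfolding k0_def by auto
      have below: "\<forall>m. i \<le> m \<and> m < k0 \<longrightarrow> m \<notin> evs tr G"
        unfolding k0_def using not_less_Least by blast
      have uniq: "k = k0" if "i \<le> k" "k \<in> evs tr G" "\<forall>j. i \<le> j \<and> j < k \<longrightarrow> j \<notin> evs tr G" for k
      proof -
        have "\<not> k < k0" using below that by blast
        moreover have "\<not> k0 < k" using k0 that by blast
        ultimately show ?thesis by linarith
      qed
      have "i \<in> tsem0 tr (Lf G d) \<longleftrightarrow>
         (\<exists>k\<ge>i. (k \<in> evs tr G \<and> Suc k \<in> tsem0 tr d) \<and> (\<forall>j. i \<le> j \<and> j < k \<longrightarrow> j \<notin> evs tr G))"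
        using True by (simp add: Lf_def tsem0_simps U FF)
      also have "\<dots> \<longleftrightarrow> Suc k0 \<in> tsem0 tr d"
      proof
        assume "\<exists>k\<ge>i. (k \<in> evs tr G \<and> Suc k \<in> tsem0 tr d) \<and> (\<forall>j. i \<le> j \<and> j < k \<longrightarrow> j \<notin> evs tr G)"
        then obtain k where "i \<le> k" "k \<in> evs tr G" "Suc k \<in> tsem0 tr d" "\<forall>j. i \<le> j \<and> j < k \<longrightarrow> j \<notin> evs tr G"
          by blast
        moreover have "k = k0" by (rule uniq) fact+
        ultimately show "Suc k0 \<in> tsem0 tr d" by simp
      next
        assume "Suc k0 \<in> tsem0 tr d"
        then show "\<exists>k\<ge>i. (k \<in> evs tr G \<and> Suc k \<in> tsem0 tr d) \<and> (\<forall>j. i \<le> j \<and> j < k \<longrightarrow> j \<notin> evs tr G)"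
          by (intro exI[of _ k0]) (use k0 below in auto)
      qed
      finally have "i \<in> tsem0 tr (Lf G d) \<longleftrightarrow> Suc k0 \<in> tsem0 tr d" .
      moreover have "succ_gamma tr i G = Suc k0" using True by (simp add: succ_gamma_char k0_def)
      ultimately show ?thesis by simp
    next
      case False
      have "i \<notin> tsem0 tr (TUntil 0 (TNot (Ef G)) (TAnd (Ef G) (TNext SG d)))"
        using U False by auto
      moreover have "i \<notin> tsem0 tr (Ff (Ef G))" using FF False by auto
      ultimately show ?thesis using False unfolding Lf_def
        by (auto simp add: tsem0_simps succ_gamma_char)
    qed
  qed
qed

lemma tsem0_stayf:
  assumes "finite G" "\<forall>e\<in>G. tfree e = {}"
  shows "i \<in> tsem0 tr (stayf G) \<longleftrightarrow> succ_gamma tr i G = Suc i"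
proof -
  have fe: "tfree (Ef G) = {}" using tfree_Ef assms by blast
  have FF: "tsem0 tr (Ff (Ef G)) = {i. \<exists>k\<ge>i. k \<in> evs tr G}"
    using fe assms by (simp add: tsem0_Ff tsem0_Ef)
  show ?thesis
  proof (cases "\<exists>k\<ge>i. k \<in> evs tr G")
    case True
    define k0 where "k0 = (LEAST k. i \<le> k \<and> k \<in> evs tr G)"
    have k0: "i \<le> k0" "k0 \<in> evs tr G" using LeastI_ex[OF True] unfolding k0_def by auto
    have "i \<in> evs tr G \<Longrightarrow> k0 = i" unfolding k0_def by (rule Least_equality) auto
    then have "k0 = i \<longleftrightarrow> i \<in> evs tr G" using k0 by auto
    then show ?thesis using True FF assms
      by (simp add: stayf_def tsem0_simps tsem0_Ef succ_gamma_char k0_def[symmetric])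
  next
    case False
    then show ?thesis using FF assms by (auto simp add: stayf_def tsem0_simps tsem0_Ef succ_gamma_char)
  qed
qed

lemma nonstay:
  assumes "succ_gamma tr 0 G \<noteq> 1"
  shows "succ_gamma tr 1 G = succ_gamma tr 0 G"
proof -
  have ex: "\<exists>k. k \<in> evs tr G" using assms by (auto simp: succ_gamma_char split: if_splits)
  define k0 where "k0 = (LEAST k. k \<in> evs tr G)"
  have k0: "k0 \<in> evs tr G" using LeastI_ex[OF ex] unfolding k0_def by auto
  have s0: "succ_gamma tr 0 G = Suc k0" using ex by (simp add: succ_gamma_char k0_def)
  have "k0 \<noteq> 0" using assms s0 by simp
  have "(LEAST k. 1 \<le> k \<and> k \<in> evs tr G) = k0"
    apply (rule Least_equality)
    using k0 \<open>k0 \<noteq> 0\<close> apply simp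
    unfolding k0_def by (simp add: Least_le)
  then have "succ_gamma tr 1 G = Suc k0" using k0 \<open>k0 \<noteq> 0\<close>
    by (subst succ_gamma_char) (auto intro!: exI[of _ k0])
  then show ?thesis using s0 by simp
qed



subsection \<open>Closure of bases\<close>

lemma tpos_free: "Y \<notin> tfree d \<Longrightarrow> tpos Y p d"
  by (induction d arbitrary: p) auto

lemma cw_TNot: "tclosed_wf a \<Longrightarrow> tclosed_wf (TNot a)" by (simp add: tclosed_wf_def)
lemma cw_TOr: "tclosed_wf a \<Longrightarrow> tclosed_wf b \<Longrightarrow> tclosed_wf (TOr a b)" by (simp add: tclosed_wf_def)
lemma cw_TNext: "tclosed_wf a \<Longrightarrow> tclosed_wf (TNext f a)" by (simp add: tclosed_wf_def)
lemma cw_TAnd: "tclosed_wf a \<Longrightarrow> tclosed_wf b \<Longrightarrow> tclosed_wf (TAnd a b)" by (simp add: tclosed_wf_def TAnd_def)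
lemma cw_ttrue: "tclosed_wf ttrue" by (simp add: tclosed_wf_def ttrue_def)
lemma cw_tfalse: "tclosed_wf tfalse" by (simp add: tclosed_wf_def ttrue_def tfalse_def)
lemma cw_until: "tclosed_wf a \<Longrightarrow> tclosed_wf b \<Longrightarrow> tclosed_wf (TUntil Y a b)"
  by (simp add: tclosed_wf_def TUntil_def TAnd_def tpos_free)
lemma cw_Efl: "\<forall>e\<in>set xs. tclosed_wf e \<Longrightarrow> tclosed_wf (Efl xs)"
  by (induction xs) (auto simp: Efl_def txor_def cw_tfalse cw_TOr cw_TAnd cw_TNot cw_TNext)
lemma cw_Ef: "finite G \<Longrightarrow> \<forall>e\<in>G. tclosed_wf e \<Longrightarrow> tclosed_wf (Ef G)"
  by (simp add: Ef_def cw_Efl lst)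
lemma cw_Lf: "finite G \<Longrightarrow> \<forall>e\<in>G. tclosed_wf e \<Longrightarrow> tclosed_wf d \<Longrightarrow> tclosed_wf (Lf G d)"
  by (simp add: Lf_def Ff_def cw_Ef cw_TOr cw_TAnd cw_TNot cw_TNext cw_until cw_ttrue)
lemma cw_stayf: "finite G \<Longrightarrow> \<forall>e\<in>G. tclosed_wf e \<Longrightarrow> tclosed_wf (stayf G)"
  by (simp add: stayf_def Ff_def cw_Ef cw_TOr cw_TNot cw_until cw_ttrue)

lemma ltl_TAnd: "is_ltl a \<Longrightarrow> is_ltl b \<Longrightarrow> is_ltl (TAnd a b)"
  by (simp add: TAnd_def is_ltl.intros)
lemma ltl_ttrue: "is_ltl ttrue" by (simp add: ttrue_def is_ltl.intros)
lemma ltl_tfalse: "is_ltl tfalse" by (simp add: tfalse_def ltl_ttrue is_ltl.intros)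
lemma ltl_Efl: "\<forall>e\<in>set xs. is_ltl e \<Longrightarrow> is_ltl (Efl xs)"
  by (induction xs) (auto simp: Efl_def txor_def ltl_tfalse ltl_TAnd is_ltl.intros)
lemma ltl_Ef: "finite G \<Longrightarrow> \<forall>e\<in>G. is_ltl e \<Longrightarrow> is_ltl (Ef G)"
  by (simp add: Ef_def ltl_Efl lst)
lemma ltl_Lf: "finite G \<Longrightarrow> \<forall>e\<in>G. is_ltl e \<Longrightarrow> is_ltl d \<Longrightarrow> is_ltl (Lf G d)"
  by (simp add: Lf_def Ff_def ltl_Ef ltl_TAnd ltl_ttrue is_ltl.intros)
lemma ltl_stayf: "finite G \<Longrightarrow> \<forall>e\<in>G. is_ltl e \<Longrightarrow> is_ltl (stayf G)"
  by (simp add: stayf_def Ff_def ltl_Ef ltl_ttrue is_ltl.intros)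

definition mfalse :: "('ap, 'd) mform" where "mfalse = MMu 0 (MVar 0)"
definition mand :: "('ap, 'd) mform \<Rightarrow> ('ap, 'd) mform \<Rightarrow> ('ap, 'd) mform" where
  "mand a b = MNot (MOr (MNot a) (MNot b))"

lemma msem_mfalse[simp]: "msem nx P W mfalse = {}"
  by (auto simp: mfalse_def)

lemma msem_mand[simp]: "msem nx P W (mand a b) = msem nx P W a \<inter> msem nx P W b"
  by (auto simp: mand_def)

lemma mfalse_props[simp]: "mfree mfalse = {}" "mwf mfalse" "mtests mfalse = {}" "mnexts mfalse = {}"
  "mtvars mfalse = {}"
  by (auto simp: mfalse_def)

lemma mand_props[simp]: "mfree (mand a b) = mfree a \<union> mfree b" "mwf (mand a b) = (mwf a \<and> mwf b)"
  "mtests (mand a b) = mtests a \<union> mtests b" "mnexts (mand a b) = mnexts a \<union> mnexts b"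
  "mtvars (mand a b) = mtvars a \<union> mtvars b"
  by (auto simp: mand_def)

lemma msem_free: "(\<forall>X\<in>mfree \<phi>. W X = W' X) \<Longrightarrow> msem nx P W \<phi> = msem nx P W' \<phi>"
proof (induction \<phi> arbitrary: W W')
  case (MOr a b)
  have "msem nx P W a = msem nx P W' a" "msem nx P W b = msem nx P W' b"
    using MOr by (intro MOr.IH; auto)+
  then show ?case by simp
next
  case (MNot a)
  have "msem nx P W a = msem nx P W' a" using MNot by (intro MNot.IH) auto
  then show ?case by simp
next
  case (MNext D a)
  have "msem nx P W a = msem nx P W' a" using MNext by (intro MNext.IH) auto
  then show ?case by simp
next
  case (MMu X a)
  have "\<And>I. msem nx P (W(X:=I)) a = msem nx P (W'(X:=I)) a"
    using MMu by (intro MMu.IH) auto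
  then show ?case by simp
qed auto

lemma msem_mono_gen:
  "mpos X p \<phi> \<Longrightarrow> I \<subseteq> J \<Longrightarrow>
   (if p then msem nx P (W(X:=I)) \<phi> \<subseteq> msem nx P (W(X:=J)) \<phi>
    else msem nx P (W(X:=J)) \<phi> \<subseteq> msem nx P (W(X:=I)) \<phi>)"
proof (induction \<phi> arbitrary: p W)
  case (MOr a b)
  have A: "if p then msem nx P (W(X:=I)) a \<subseteq> msem nx P (W(X:=J)) a
    else msem nx P (W(X:=J)) a \<subseteq> msem nx P (W(X:=I)) a"
    using MOr.IH(1)[of p W] MOr.prems by simp
  have B: "if p then msem nx P (W(X:=I)) b \<subseteq> msem nx P (W(X:=J)) b
    else msem nx P (W(X:=J)) b \<subseteq> msem nx P (W(X:=I)) b"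
    using MOr.IH(2)[of p W] MOr.prems by simp
  show ?case using A B by (cases p) auto
next
  case (MNot a)
  have A: "if \<not>p then msem nx P (W(X:=I)) a \<subseteq> msem nx P (W(X:=J)) a
    else msem nx P (W(X:=J)) a \<subseteq> msem nx P (W(X:=I)) a"
    using MNot.IH[of "\<not>p" W] MNot.prems by simp
  show ?case using A by (cases p) auto
next
  case (MNext D a)
  have A: "if p then msem nx P (W(X:=I)) a \<subseteq> msem nx P (W(X:=J)) a
    else msem nx P (W(X:=J)) a \<subseteq> msem nx P (W(X:=I)) a"
    using MNext.IH[of p W] MNext.prems by simp
  show ?case using A by (cases p) auto
next
  case (MMu Z a)
  show ?case
  proof (cases "Z = X")
    case True
    then show ?thesis by (simp del: fun_upd_apply)
  next
    case False
    then have pa: "mpos X p a" using MMu.prems by simp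
    have step: "if p then msem nx P (W(Z:=K, X:=I)) a \<subseteq> msem nx P (W(Z:=K, X:=J)) a
      else msem nx P (W(Z:=K, X:=J)) a \<subseteq> msem nx P (W(Z:=K, X:=I)) a" for K
      using MMu.IH[OF pa MMu.prems(2)] by blast
    have tw: "\<And>K L. W(Z:=K, X:=L) = W(X:=L, Z:=K)" using False by (simp add: fun_upd_twist)
    show ?thesis
    proof (cases p)
      case True
      have "\<And>K. msem nx P (W(X:=I, Z:=K)) a \<subseteq> msem nx P (W(X:=J, Z:=K)) a"
        using step True by (simp add: tw)
      then show ?thesis using True by simp blast
    next
      case False
      have "\<And>K. msem nx P (W(X:=J, Z:=K)) a \<subseteq> msem nx P (W(X:=I, Z:=K)) a"
        using step False by (simp add: tw)
      then show ?thesis using False by simp blast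
    qed
  qed
qed auto

lemma msem_mono: "mpos X True \<phi> \<Longrightarrow> mono (\<lambda>I. msem nx P (W(X:=I)) \<phi>)"
proof (rule monoI)
  fix I J :: "pos set" assume "mpos X True \<phi>" "I \<subseteq> J"
  then show "msem nx P (W(X:=I)) \<phi> \<subseteq> msem nx P (W(X:=J)) \<phi>"
    using msem_mono_gen[of X True \<phi> I J nx P W] by simp
qed

lemma msem_Mu_lfp: "msem nx P W (MMu X \<phi>) = lfp (\<lambda>I. msem nx P (W(X:=I)) \<phi>)"
  by (simp add: lfp_def)

lemma mpos_free: "X \<notin> mfree \<phi> \<Longrightarrow> mpos X p \<phi>"
  by (induction \<phi> arbitrary: p) auto



subsection \<open>Invariance under agreement on the quantified trace variables\<close>

definition agree :: "nat set \<Rightarrow> pos \<Rightarrow> pos \<Rightarrow> bool" where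
  "agree Q v v' \<longleftrightarrow> (\<forall>p\<in>Q. v p = v' p)"
definition qinv :: "nat set \<Rightarrow> pos set \<Rightarrow> bool" where
  "qinv Q A \<longleftrightarrow> (\<forall>v v'. agree Q v v' \<longrightarrow> v \<in> A \<longrightarrow> v' \<in> A)"

lemma agree_sym: "agree Q v v' \<Longrightarrow> agree Q v' v" by (auto simp: agree_def)
lemma agree_trans: "agree Q u v \<Longrightarrow> agree Q v w \<Longrightarrow> agree Q u w" by (auto simp: agree_def)
lemma agree_refl: "agree Q v v" by (auto simp: agree_def)

lemma qinv_lfp:
  assumes "mono F" "\<And>I. qinv Q I \<Longrightarrow> qinv Q (F I)"
  shows "qinv Q (lfp F)"
proof -
  define int where "int I = {v. \<forall>v'. agree Q v v' \<longrightarrow> v' \<in> I}" for I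
  have int_inv: "qinv Q (int I)" for I unfolding qinv_def int_def using agree_trans by blast
  have int_sub: "int I \<subseteq> I" for I unfolding int_def using agree_refl by blast
  have pre: "F (int I) \<subseteq> int I" if "F I \<subseteq> I" for I
  proof
    fix v assume v: "v \<in> F (int I)"
    have FI: "F (int I) \<subseteq> I" using monoD[OF assms(1) int_sub[of I]] that by blast
    show "v \<in> int I" unfolding int_def
    proof (intro CollectI allI impI)
      fix v' assume "agree Q v v'"
      then have "v' \<in> F (int I)" using assms(2)[OF int_inv[of I]] v unfolding qinv_def by blast
      then show "v' \<in> I" using FI by blast
    qed
  qed
  have sub: "lfp F \<subseteq> int (lfp F)"
    by (rule lfp_lowerbound) (rule pre, simp add: lfp_fixpoint[OF assms(1)])
  show ?thesis unfolding qinv_def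
  proof (intro allI impI)
    fix v v' assume "agree Q v v'" "v \<in> lfp F"
    then show "v' \<in> lfp F" using sub unfolding int_def by blast
  qed
qed

lemma lfp_inv2:
  assumes "mono F1" "mono F2" "\<And>I. qinv Q I \<Longrightarrow> F1 I = F2 I \<and> qinv Q (F1 I)"
  shows "lfp F1 = lfp F2 \<and> qinv Q (lfp F1)"
proof -
  have i1: "qinv Q (lfp F1)" using qinv_lfp[OF assms(1)] assms(3) by blast
  have i2: "qinv Q (lfp F2)" using qinv_lfp[OF assms(2)] assms(3) by metis
  have "lfp F2 \<le> lfp F1"
    by (rule lfp_lowerbound) (metis assms(3) i1 lfp_fixpoint[OF assms(1)] order_refl)
  moreover have "lfp F1 \<le> lfp F2"
    by (rule lfp_lowerbound) (metis assms(3) i2 lfp_fixpoint[OF assms(2)] order_refl)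
  ultimately show ?thesis using i1 by simp
qed

lemma stut_normalize:
  "mtvars \<phi> \<subseteq> Q \<Longrightarrow> mwf \<phi> \<Longrightarrow> (\<forall>G\<in>mnexts \<phi>. \<forall>p\<in>Q. G p = g p) \<Longrightarrow> (\<forall>X. qinv Q (W X)) \<Longrightarrow>
   msem stutter_next P W \<phi> = msem (\<lambda>_. stutter_next g) P W \<phi> \<and> qinv Q (msem stutter_next P W \<phi>)"
proof (induction \<phi> arbitrary: W)
  case (MTest d p)
  then show ?case by (auto simp: qinv_def agree_def)
next
  case (MVar X) then show ?case by simp
next
  case (MOr a b)
  from MOr.prems have A: "msem stutter_next P W a = msem (\<lambda>_. stutter_next g) P W a \<and> qinv Q (msem stutter_next P W a)"
    by (intro MOr.IH(1)) auto
  from MOr.prems have B: "msem stutter_next P W b = msem (\<lambda>_. stutter_next g) P W b \<and> qinv Q (msem stutter_next P W b)"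
    by (intro MOr.IH(2)) auto
  show ?case using A B unfolding qinv_def by auto
next
  case (MNot a)
  from MNot.prems have A: "msem stutter_next P W a = msem (\<lambda>_. stutter_next g) P W a \<and> qinv Q (msem stutter_next P W a)"
    by (intro MNot.IH) auto
  have q: "qinv Q (- msem stutter_next P W a)" using A agree_sym unfolding qinv_def by blast
  show ?case using A q by simp
next
  case (MNext G a)
  from MNext.prems have A: "msem stutter_next P W a = msem (\<lambda>_. stutter_next g) P W a \<and> qinv Q (msem stutter_next P W a)"
    by (intro MNext.IH) auto
  have Gg: "\<forall>p\<in>Q. G p = g p" using MNext.prems(3) by simp
  have ag: "agree Q (stutter_next G P v) (stutter_next g P v)" for v
    using Gg by (simp add: agree_def stutter_next_def)
  have ag2: "agree Q (stutter_next G P v) (stutter_next G P v')" if "agree Q v v'" for v v'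
    using that by (simp add: agree_def stutter_next_def)
  let ?A = "msem stutter_next P W a"
  have "{v. stutter_next G P v \<in> ?A} = {v. stutter_next g P v \<in> ?A}"
    using A ag agree_sym unfolding qinv_def by blast
  moreover have "qinv Q {v. stutter_next G P v \<in> ?A}"
    using A ag2 unfolding qinv_def by blast
  ultimately show ?case using A by simp
next
  case (MMu X a)
  let ?F1 = "\<lambda>I. msem stutter_next P (W(X:=I)) a"
  let ?F2 = "\<lambda>I. msem (\<lambda>_. stutter_next g) P (W(X:=I)) a"
  have pa: "mpos X True a" using MMu.prems by simp
  have "lfp ?F1 = lfp ?F2 \<and> qinv Q (lfp ?F1)"
  proof (rule lfp_inv2)
    show "mono ?F1" "mono ?F2" using pa by (auto intro: msem_mono)
    show "?F1 I = ?F2 I \<and> qinv Q (?F1 I)" if "qinv Q I" for I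
      using MMu.prems that by (intro MMu.IH) auto
  qed
  then show ?case unfolding msem_Mu_lfp by metis
qed

subsection \<open>The translation\<close>

fun Tr :: "nat set \<Rightarrow> (nat \<Rightarrow> 'ap tform set) \<Rightarrow> (nat \<Rightarrow> ('ap, nat \<Rightarrow> 'ap tform) mform)
    \<Rightarrow> ('ap, 'd) mform \<Rightarrow> ('ap, nat \<Rightarrow> 'ap tform) mform" where
  "Tr S g \<sigma> (MTest d p) = MTest (if p \<in> S then TNext SG d else TNext SG (Lf (g p) d)) p"
| "Tr S g \<sigma> (MVar X) = \<sigma> X"
| "Tr S g \<sigma> (MOr a b) = MOr (Tr S g \<sigma> a) (Tr S g \<sigma> b)"
| "Tr S g \<sigma> (MNot a) = MNot (Tr S g \<sigma> a)"
| "Tr S g \<sigma> (MNext D a) = MNext (\<lambda>p. Ef (g p)) (Tr S g \<sigma> a)"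
| "Tr S g \<sigma> (MMu X a) = MMu X (Tr S g (\<sigma>(X := MVar X)) a)"

fun Tr0 :: "nat set \<Rightarrow> (nat \<Rightarrow> 'ap tform set) \<Rightarrow> (nat \<Rightarrow> ('ap, nat \<Rightarrow> 'ap tform) mform)
    \<Rightarrow> ('ap, 'd) mform \<Rightarrow> ('ap, nat \<Rightarrow> 'ap tform) mform" where
  "Tr0 S g \<rho> (MTest d p) = MTest d p"
| "Tr0 S g \<rho> (MVar X) = mfalse"
| "Tr0 S g \<rho> (MOr a b) = MOr (Tr0 S g \<rho> a) (Tr0 S g \<rho> b)"
| "Tr0 S g \<rho> (MNot a) = MNot (Tr0 S g \<rho> a)"
| "Tr0 S g \<rho> (MNext D a) = Tr S g \<rho> a"
| "Tr0 S g \<rho> (MMu X a) = Tr0 S g (\<rho>(X := Tr S g \<rho> (MMu X a))) a"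

fun Build :: "(nat \<Rightarrow> 'ap tform set) \<Rightarrow> ('ap, 'd) mform \<Rightarrow> nat list \<Rightarrow> nat set
    \<Rightarrow> ('ap, nat \<Rightarrow> 'ap tform) mform" where
  "Build g \<phi> [] S = Tr0 S g (\<lambda>_. mfalse) \<phi>"
| "Build g \<phi> (p # ps) S = MOr (mand (MTest (stayf (g p)) p) (Build g \<phi> ps (insert p S)))
                              (mand (MNot (MTest (stayf (g p)) p)) (Build g \<phi> ps S))"

definition tmap :: "nat set \<Rightarrow> (nat \<Rightarrow> 'ap tform set) \<Rightarrow> 'ap tassign \<Rightarrow> pos \<Rightarrow> pos" where
  "tmap S g P w = (\<lambda>p. if p \<in> S then Suc (w p) else succ_gamma (P p) (Suc (w p)) (g p))"

definition gok :: "(nat \<Rightarrow> 'ap tform set) \<Rightarrow> bool" where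
  "gok g \<longleftrightarrow> (\<forall>p. finite (g p) \<and> (\<forall>d\<in>g p. tfree d = {}))"

lemma tmap_next: "gok g \<Longrightarrow>
  tmap S g P (mumble_next (\<lambda>p. Ef (g p)) P w) = stutter_next g P (tmap S g P w)"
  unfolding tmap_def mumble_next_def stutter_next_def gok_def
  by (rule ext) (auto simp: succ_delta_Ef)

lemma lfp_transfer:
  assumes "mono G" "\<And>J. G {w. t w \<in> J} = {w. t w \<in> F J}"
  shows "lfp G = {w. t w \<in> lfp F}"
proof
  show "lfp G \<subseteq> {w. t w \<in> lfp F}"
  proof
    fix w assume w: "w \<in> lfp G"
    have "t w \<in> J" if "F J \<subseteq> J" for J
    proof -
      have "lfp G \<subseteq> {w. t w \<in> J}" by (rule lfp_lowerbound) (use that assms(2) in auto)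
      then show ?thesis using w by blast
    qed
    then have "t w \<in> \<Inter>{J. F J \<subseteq> J}" by blast
    then show "w \<in> {w. t w \<in> lfp F}" by (simp add: lfp_def)
  qed
  show "{w. t w \<in> lfp F} \<subseteq> lfp G"
  proof (rule lfp_greatest)
    fix I assume I: "G I \<subseteq> I"
    define JI where "JI = {v. \<forall>w. t w = v \<longrightarrow> w \<in> I}"
    have sub: "{w. t w \<in> JI} \<subseteq> I" unfolding JI_def by blast
    have "G {w. t w \<in> JI} \<subseteq> I" using monoD[OF assms(1) sub] I by blast
    then have "{w. t w \<in> F JI} \<subseteq> I" using assms(2) by simp
    then have "F JI \<subseteq> JI" unfolding JI_def by blast
    then have "lfp F \<subseteq> JI" by (rule lfp_lowerbound)
    then show "{w. t w \<in> lfp F} \<subseteq> I" using sub by blast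
  qed
qed

lemma lfp_point:
  assumes "mono F"
  shows "z \<in> lfp F \<longleftrightarrow> z \<in> F (lfp F - {z})"
proof
  assume "z \<in> F (lfp F - {z})"
  then show "z \<in> lfp F"
    using monoD[OF assms, of "lfp F - {z}" "lfp F"] lfp_fixpoint[OF assms] by blast
next
  assume z: "z \<in> lfp F"
  show "z \<in> F (lfp F - {z})"
  proof (rule ccontr)
    assume "z \<notin> F (lfp F - {z})"
    moreover have "F (lfp F - {z}) \<subseteq> lfp F"
      using monoD[OF assms, of "lfp F - {z}" "lfp F"] lfp_fixpoint[OF assms] by blast
    ultimately have "F (lfp F - {z}) \<subseteq> lfp F - {z}" by blast
    then have "lfp F \<subseteq> lfp F - {z}" by (rule lfp_lowerbound)
    then show False using z by blast
  qed
qed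

subsection \<open>Well-formedness of the translation\<close>

lemma Tr_mpos: "(\<forall>Y. mfree (\<sigma> Y) \<subseteq> {Y}) \<Longrightarrow> \<sigma> X = MVar X \<Longrightarrow> mpos X p \<phi> \<Longrightarrow> mpos X p (Tr S g \<sigma> \<phi>)"
proof (induction \<phi> arbitrary: \<sigma> p)
  case (MVar Y)
  show ?case
  proof (cases "Y = X")
    case True then show ?thesis using MVar by simp
  next
    case False
    then have "X \<notin> mfree (\<sigma> Y)" using MVar.prems(1) by blast
    then show ?thesis by (simp add: mpos_free)
  qed
next
  case (MMu Z a)
  show ?case
  proof (cases "Z = X")
    case True then show ?thesis by simp
  next
    case False
    have "mpos X p (Tr S g (\<sigma>(Z := MVar Z)) a)"
      by (rule MMu.IH) (use MMu.prems False in auto)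
    then show ?thesis by simp
  qed
qed auto

lemma Tr_mwf: "(\<forall>Y. mfree (\<sigma> Y) \<subseteq> {Y} \<and> mwf (\<sigma> Y)) \<Longrightarrow> mwf \<phi> \<Longrightarrow> mwf (Tr S g \<sigma> \<phi>)"
proof (induction \<phi> arbitrary: \<sigma>)
  case (MMu X a)
  have 1: "mwf (Tr S g (\<sigma>(X := MVar X)) a)" by (rule MMu.IH) (use MMu.prems in auto)
  have 2: "mpos X True (Tr S g (\<sigma>(X := MVar X)) a)" by (rule Tr_mpos) (use MMu.prems in auto)
  show ?case using 1 2 by simp
qed auto

lemma Tr_mfree: "mfree (Tr S g \<sigma> \<phi>) \<subseteq> (\<Union>Y\<in>mfree \<phi>. mfree (\<sigma> Y))"
proof (induction \<phi> arbitrary: \<sigma>)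
  case (MOr a b)
  have "mfree (Tr S g \<sigma> a) \<subseteq> (\<Union>Y\<in>mfree a. mfree (\<sigma> Y))"
    "mfree (Tr S g \<sigma> b) \<subseteq> (\<Union>Y\<in>mfree b. mfree (\<sigma> Y))" by (rule MOr.IH)+
  then show ?case by auto
next
  case (MMu X a)
  have "mfree (Tr S g (\<sigma>(X:=MVar X)) a) \<subseteq> (\<Union>Y\<in>mfree a. mfree ((\<sigma>(X:=MVar X)) Y))"
    by (rule MMu.IH)
  then show ?case by (force split: if_splits)
qed auto

lemma Tr_tests:
  assumes c1: "\<And>d. Bp d \<Longrightarrow> Bp (TNext SG d)" and c2: "\<And>d p. Bp d \<Longrightarrow> Bp (TNext SG (Lf (g p) d))"
  shows "(\<forall>d\<in>mtests \<phi>. Bp d) \<Longrightarrow> (\<forall>Y. \<forall>d\<in>mtests (\<sigma> Y). Bp d) \<Longrightarrow> \<forall>d\<in>mtests (Tr S g \<sigma> \<phi>). Bp d"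
proof (induction \<phi> arbitrary: \<sigma>)
  case (MTest d p) then show ?case by (simp add: c1 c2)
next
  case (MVar X) then show ?case by simp
next
  case (MOr a b)
  have "\<forall>d\<in>mtests (Tr S g \<sigma> a). Bp d" by (rule MOr.IH(1)) (use MOr.prems in auto)
  moreover have "\<forall>d\<in>mtests (Tr S g \<sigma> b). Bp d" by (rule MOr.IH(2)) (use MOr.prems in auto)
  ultimately show ?case by auto
next
  case (MNot a)
  have "\<forall>d\<in>mtests (Tr S g \<sigma> a). Bp d" by (rule MNot.IH) (use MNot.prems in auto)
  then show ?case by simp
next
  case (MNext D a)
  have "\<forall>d\<in>mtests (Tr S g \<sigma> a). Bp d" by (rule MNext.IH) (use MNext.prems in auto)
  then show ?case by simp
next
  case (MMu X a)
  have "\<forall>d\<in>mtests (Tr S g (\<sigma>(X:=MVar X)) a). Bp d" by (rule MMu.IH) (use MMu.prems in auto)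
  then show ?case by simp
qed

lemma Tr_nexts: "(\<forall>Y. mnexts (\<sigma> Y) \<subseteq> {\<lambda>p. Ef (g p)}) \<Longrightarrow> mnexts (Tr S g \<sigma> \<phi>) \<subseteq> {\<lambda>p. Ef (g p)}"
  by (induction \<phi> arbitrary: \<sigma>) auto

lemma Tr_tvars: "mtvars \<phi> \<subseteq> Q \<Longrightarrow> (\<forall>Y. mtvars (\<sigma> Y) \<subseteq> Q) \<Longrightarrow> mtvars (Tr S g \<sigma> \<phi>) \<subseteq> Q"
  by (induction \<phi> arbitrary: \<sigma>) auto

definition OKf :: "('ap tform \<Rightarrow> bool) \<Rightarrow> nat set \<Rightarrow> (nat \<Rightarrow> 'ap tform set) \<Rightarrow> ('ap, nat \<Rightarrow> 'ap tform) mform \<Rightarrow> bool" where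
  "OKf Bp Q g \<psi> \<longleftrightarrow> mfree \<psi> = {} \<and> mwf \<psi> \<and> (\<forall>d\<in>mtests \<psi>. Bp d) \<and> mnexts \<psi> \<subseteq> {\<lambda>p. Ef (g p)} \<and> mtvars \<psi> \<subseteq> Q"

lemma Tr_OK:
  assumes "\<forall>Y. OKf Bp Q g (\<rho> Y)" "mwf \<phi>" "\<forall>d\<in>mtests \<phi>. Bp d" "mtvars \<phi> \<subseteq> Q"
    "\<And>d. Bp d \<Longrightarrow> Bp (TNext SG d)" "\<And>d p. Bp d \<Longrightarrow> Bp (TNext SG (Lf (g p) d))"
  shows "OKf Bp Q g (Tr S g \<rho> \<phi>)"
proof -
  have "mfree (Tr S g \<rho> \<phi>) = {}" using Tr_mfree[of S g \<rho> \<phi>] assms(1) by (auto simp: OKf_def)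
  moreover have "mwf (Tr S g \<rho> \<phi>)" by (rule Tr_mwf) (use assms in \<open>auto simp: OKf_def\<close>)
  moreover have "\<forall>d\<in>mtests (Tr S g \<rho> \<phi>). Bp d"
    by (rule Tr_tests[where Bp=Bp and g=g, OF assms(5,6)]) (use assms(1,3) in \<open>auto simp: OKf_def\<close>)
  moreover have "mnexts (Tr S g \<rho> \<phi>) \<subseteq> {\<lambda>p. Ef (g p)}" by (rule Tr_nexts) (use assms in \<open>auto simp: OKf_def\<close>)
  moreover have "mtvars (Tr S g \<rho> \<phi>) \<subseteq> Q" by (rule Tr_tvars) (use assms in \<open>auto simp: OKf_def\<close>)
  ultimately show ?thesis by (simp add: OKf_def)
qed

lemma Tr0_OK:
  assumes c1: "\<And>d. Bp d \<Longrightarrow> Bp (TNext SG d)" and c2: "\<And>d p. Bp d \<Longrightarrow> Bp (TNext SG (Lf (g p) d))"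
  shows "\<forall>Y. OKf Bp Q g (\<rho> Y) \<Longrightarrow> mwf \<phi> \<Longrightarrow> \<forall>d\<in>mtests \<phi>. Bp d \<Longrightarrow> mtvars \<phi> \<subseteq> Q \<Longrightarrow>
    OKf Bp Q g (Tr0 S g \<rho> \<phi>)"
proof (induction \<phi> arbitrary: \<rho>)
  case (MTest d p) then show ?case by (simp add: OKf_def)
next
  case (MVar X) then show ?case by (simp add: OKf_def)
next
  case (MOr a b)
  have "OKf Bp Q g (Tr0 S g \<rho> a)" by (rule MOr.IH(1)) (use MOr.prems in auto)
  moreover have "OKf Bp Q g (Tr0 S g \<rho> b)" by (rule MOr.IH(2)) (use MOr.prems in auto)
  ultimately show ?case unfolding OKf_def by auto
next
  case (MNot a)
  have "OKf Bp Q g (Tr0 S g \<rho> a)" by (rule MNot.IH) (use MNot.prems in auto)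
  then show ?case by (simp add: OKf_def)
next
  case (MNext D a)
  have "OKf Bp Q g (Tr S g \<rho> a)" by (rule Tr_OK[where Bp=Bp and g=g, OF _ _ _ _ c1 c2]) (use MNext.prems in auto)
  then show ?case by simp
next
  case (MMu X a)
  have "OKf Bp Q g (Tr S g \<rho> (MMu X a))" by (rule Tr_OK[where Bp=Bp and g=g, OF _ _ _ _ c1 c2]) (use MMu.prems in auto)
  then have "OKf Bp Q g (Tr0 S g (\<rho>(X := Tr S g \<rho> (MMu X a))) a)"
    using MMu.prems by (intro MMu.IH) auto
  then show ?case by (simp del: Tr.simps)
qed

lemma Build_OK:
  assumes "\<And>d. Bp d \<Longrightarrow> Bp (TNext SG d)" "\<And>d p. Bp d \<Longrightarrow> Bp (TNext SG (Lf (g p) d))"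
    "\<forall>p. Bp (stayf (g p))" "mfree \<phi> = {}" "mwf \<phi>" "\<forall>d\<in>mtests \<phi>. Bp d" "mtvars \<phi> \<subseteq> Q"
  shows "set qs \<subseteq> Q \<Longrightarrow> OKf Bp Q g (Build g \<phi> qs S)"
proof (induction qs arbitrary: S)
  case Nil
  have "OKf Bp Q g (Tr0 S g (\<lambda>_. mfalse) \<phi>)"
    by (rule Tr0_OK[where Bp=Bp and g=g, OF assms(1,2)]) (use assms(4-7) in \<open>auto simp: OKf_def\<close>)
  then show ?case by simp
next
  case (Cons p ps)
  then have "OKf Bp Q g (Build g \<phi> ps (insert p S))" "OKf Bp Q g (Build g \<phi> ps S)" by auto
  then show ?case using Cons.prems assms(3) by (auto simp: OKf_def)
qed

subsection \<open>Semantic correctness\<close>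

lemma Tr_sem:
  assumes "gok g"
  shows "(\<forall>d\<in>mtests \<phi>. tfree d = {}) \<Longrightarrow> mwf \<phi> \<Longrightarrow> (\<forall>Y. mfree (\<sigma> Y) \<subseteq> {Y}) \<Longrightarrow>
    (\<forall>Y\<in>mfree \<phi>. msem mumble_next P W' (\<sigma> Y) = {w. tmap S g P w \<in> W Y}) \<Longrightarrow>
    msem mumble_next P W' (Tr S g \<sigma> \<phi>) = {w. tmap S g P w \<in> msem (\<lambda>_. stutter_next g) P W \<phi>}"
proof (induction \<phi> arbitrary: \<sigma> W W')
  case (MTest d p)
  have fin: "finite (g p)" "\<forall>e\<in>g p. tfree e = {}" using assms by (auto simp: gok_def)
  show ?case using MTest.prems fin by (auto simp: tmap_def tsem0_simps tsem0_Lf)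
next
  case (MVar X) then show ?case by simp
next
  case (MOr a b)
  have "msem mumble_next P W' (Tr S g \<sigma> a) = {w. tmap S g P w \<in> msem (\<lambda>_. stutter_next g) P W a}"
    using MOr.prems by (intro MOr.IH(1)) auto
  moreover have "msem mumble_next P W' (Tr S g \<sigma> b) = {w. tmap S g P w \<in> msem (\<lambda>_. stutter_next g) P W b}"
    using MOr.prems by (intro MOr.IH(2)) auto
  ultimately show ?case by auto
next
  case (MNot a)
  have "msem mumble_next P W' (Tr S g \<sigma> a) = {w. tmap S g P w \<in> msem (\<lambda>_. stutter_next g) P W a}"
    using MNot.prems by (intro MNot.IH) auto
  then show ?case by auto
next
  case (MNext D a)
  have IH: "msem mumble_next P W' (Tr S g \<sigma> a) = {w. tmap S g P w \<in> msem (\<lambda>_. stutter_next g) P W a}"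
    using MNext.prems by (intro MNext.IH) auto
  show ?case using IH tmap_next[OF assms] by simp
next
  case (MMu X a)
  define \<sigma>' where "\<sigma>' = \<sigma>(X := MVar X)"
  define G where "G = (\<lambda>I. msem mumble_next P (W'(X:=I)) (Tr S g \<sigma>' a))"
  define F where "F = (\<lambda>J. msem (\<lambda>_. stutter_next g) P (W(X:=J)) a)"
  have fr: "\<forall>Y. mfree (\<sigma>' Y) \<subseteq> {Y}" using MMu.prems(3) by (simp add: \<sigma>'_def)
  have pa: "mpos X True a" using MMu.prems(2) by simp
  have "mpos X True (Tr S g \<sigma>' a)" by (rule Tr_mpos) (use fr pa in \<open>auto simp: \<sigma>'_def\<close>)
  then have mG: "mono G" unfolding G_def by (rule msem_mono)
  have eq: "G {w. tmap S g P w \<in> J} = {w. tmap S g P w \<in> F J}" for J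
    unfolding G_def F_def
  proof (rule MMu.IH)
    show "\<forall>d\<in>mtests a. tfree d = {}" "mwf a" "\<forall>Y. mfree (\<sigma>' Y) \<subseteq> {Y}" using MMu.prems fr by auto
    show "\<forall>Y\<in>mfree a. msem mumble_next P (W'(X := {w. tmap S g P w \<in> J})) (\<sigma>' Y) =
      {w. tmap S g P w \<in> (W(X := J)) Y}"
    proof
      fix Y assume Y: "Y \<in> mfree a"
      show "msem mumble_next P (W'(X := {w. tmap S g P w \<in> J})) (\<sigma>' Y) = {w. tmap S g P w \<in> (W(X := J)) Y}"
      proof (cases "Y = X")
        case True then show ?thesis by (simp add: \<sigma>'_def)
      next
        case False
        have "msem mumble_next P (W'(X := {w. tmap S g P w \<in> J})) (\<sigma> Y) = msem mumble_next P W' (\<sigma> Y)"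
          by (rule msem_free) (use MMu.prems(3)[rule_format, of Y] False in auto)
        then show ?thesis using MMu.prems(4) Y False by (simp add: \<sigma>'_def)
      qed
    qed
  qed
  have "msem mumble_next P W' (Tr S g \<sigma> (MMu X a)) = lfp G" by (simp add: lfp_def G_def \<sigma>'_def)
  also have "\<dots> = {w. tmap S g P w \<in> lfp F}" by (rule lfp_transfer[OF mG eq])
  also have "\<dots> = {w. tmap S g P w \<in> msem (\<lambda>_. stutter_next g) P W (MMu X a)}"
    by (simp add: lfp_def F_def)
  finally show ?case .
qed

lemma Tr0_sem:
  assumes "gok g" and br: "tmap S g P (\<lambda>_. 0) = stutter_next g P (\<lambda>_. 0)"
  shows "(\<forall>d\<in>mtests \<phi>. tfree d = {}) \<Longrightarrow> mwf \<phi> \<Longrightarrow> (\<forall>Y. mfree (\<rho> Y) = {}) \<Longrightarrow>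
    (\<forall>Y\<in>mfree \<phi>. (\<lambda>_. 0) \<notin> W Y \<and> msem mumble_next P W' (\<rho> Y) = {w. tmap S g P w \<in> W Y}) \<Longrightarrow>
    ((\<lambda>_. 0) \<in> msem mumble_next P W' (Tr0 S g \<rho> \<phi>) \<longleftrightarrow> (\<lambda>_. 0) \<in> msem (\<lambda>_. stutter_next g) P W \<phi>)"
proof (induction \<phi> arbitrary: \<rho> W)
  case (MTest d p) then show ?case by simp
next
  case (MVar X) then show ?case by simp
next
  case (MOr a b)
  have "((\<lambda>_. 0) \<in> msem mumble_next P W' (Tr0 S g \<rho> a) \<longleftrightarrow> (\<lambda>_. 0) \<in> msem (\<lambda>_. stutter_next g) P W a)"
    using MOr.prems by (intro MOr.IH(1)) auto
  moreover have "((\<lambda>_. 0) \<in> msem mumble_next P W' (Tr0 S g \<rho> b) \<longleftrightarrow> (\<lambda>_. 0) \<in> msem (\<lambda>_. stutter_next g) P W b)"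
    using MOr.prems by (intro MOr.IH(2)) auto
  ultimately show ?case by simp
next
  case (MNot a)
  have "((\<lambda>_. 0) \<in> msem mumble_next P W' (Tr0 S g \<rho> a) \<longleftrightarrow> (\<lambda>_. 0) \<in> msem (\<lambda>_. stutter_next g) P W a)"
    using MNot.prems by (intro MNot.IH) auto
  then show ?case by simp
next
  case (MNext D a)
  have "msem mumble_next P W' (Tr S g \<rho> a) = {w. tmap S g P w \<in> msem (\<lambda>_. stutter_next g) P W a}"
    by (rule Tr_sem[OF assms(1)]) (use MNext.prems in auto)
  then show ?case using br by simp
next
  case (MMu X a)
  define F where "F = (\<lambda>J. msem (\<lambda>_. stutter_next g) P (W(X:=J)) a)"
  have mF: "mono F" unfolding F_def by (rule msem_mono) (use MMu.prems(2) in simp)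
  define J0 where "J0 = lfp F - {\<lambda>_. 0}"
  have trm: "msem mumble_next P W' (Tr S g \<rho> (MMu X a)) = {w. tmap S g P w \<in> msem (\<lambda>_. stutter_next g) P W (MMu X a)}"
    by (rule Tr_sem[OF assms(1)]) (use MMu.prems in auto)
  have nz: "tmap S g P w \<noteq> (\<lambda>_. 0)" for w
  proof
    assume "tmap S g P w = (\<lambda>_. 0)"
    then have "tmap S g P w 0 = 0" by simp
    then show False using succ_gamma_gt[of "Suc (w 0)" "P 0" "g 0"] by (simp add: tmap_def split: if_splits)
  qed
  have "msem (\<lambda>_. stutter_next g) P W (MMu X a) = lfp F" by (simp add: lfp_def F_def)
  then have trm': "msem mumble_next P W' (Tr S g \<rho> (MMu X a)) = {w. tmap S g P w \<in> J0}"
    using trm nz unfolding J0_def by blast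
  have fr: "mfree (Tr S g \<rho> (MMu X a)) = {}"
    using Tr_mfree[of S g \<rho> "MMu X a"] MMu.prems(3) by auto
  have IH: "(\<lambda>_. 0) \<in> msem mumble_next P W' (Tr0 S g (\<rho>(X := Tr S g \<rho> (MMu X a))) a) \<longleftrightarrow> (\<lambda>_. 0) \<in> F J0"
    unfolding F_def
  proof (rule MMu.IH)
    show "\<forall>d\<in>mtests a. tfree d = {}" "mwf a" using MMu.prems by auto
    show "\<forall>Y. mfree ((\<rho>(X := Tr S g \<rho> (MMu X a))) Y) = {}" using fr MMu.prems(3) by simp
    show "\<forall>Y\<in>mfree a. (\<lambda>_. 0) \<notin> (W(X := J0)) Y \<and>
      msem mumble_next P W' ((\<rho>(X := Tr S g \<rho> (MMu X a))) Y) = {w. tmap S g P w \<in> (W(X := J0)) Y}"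
      using MMu.prems(4) trm' by (auto simp: J0_def)
  qed
  have "(\<lambda>_. 0) \<in> lfp F \<longleftrightarrow> (\<lambda>_. 0) \<in> F J0" unfolding J0_def by (rule lfp_point[OF mF])
  then show ?case using IH by (simp add: lfp_def F_def del: Tr.simps)
qed

lemma Build_sem:
  "(\<lambda>_. 0) \<in> msem mumble_next P W' (Build g \<phi> qs S) \<longleftrightarrow>
   (\<lambda>_. 0) \<in> msem mumble_next P W' (Tr0 (S \<union> {p\<in>set qs. 0 \<in> tsem0 (P p) (stayf (g p))}) g (\<lambda>_. mfalse) \<phi>)"
proof (induction qs arbitrary: S)
  case Nil then show ?case by simp
next
  case (Cons p ps)
  show ?case
  proof (cases "0 \<in> tsem0 (P p) (stayf (g p))")
    case True
    have e: "insert p S \<union> {q\<in>set ps. 0 \<in> tsem0 (P q) (stayf (g q))} = S \<union> {q\<in>set (p#ps). 0 \<in> tsem0 (P q) (stayf (g q))}"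
      using True by auto
    have "(\<lambda>_. 0) \<in> msem mumble_next P W' (Build g \<phi> (p#ps) S) \<longleftrightarrow> (\<lambda>_. 0) \<in> msem mumble_next P W' (Build g \<phi> ps (insert p S))"
      using True by simp
    also have "\<dots> \<longleftrightarrow> (\<lambda>_. 0) \<in> msem mumble_next P W' (Tr0 (insert p S \<union> {q\<in>set ps. 0 \<in> tsem0 (P q) (stayf (g q))}) g (\<lambda>_. mfalse) \<phi>)"
      by (rule Cons.IH)
    also have "\<dots> \<longleftrightarrow> (\<lambda>_. 0) \<in> msem mumble_next P W' (Tr0 (S \<union> {q\<in>set (p#ps). 0 \<in> tsem0 (P q) (stayf (g q))}) g (\<lambda>_. mfalse) \<phi>)"
      by (simp only: e)
    finally show ?thesis .
  next
    case False
    have e: "S \<union> {q\<in>set ps. 0 \<in> tsem0 (P q) (stayf (g q))} = S \<union> {q\<in>set (p#ps). 0 \<in> tsem0 (P q) (stayf (g q))}"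
      using False by auto
    have "(\<lambda>_. 0) \<in> msem mumble_next P W' (Build g \<phi> (p#ps) S) \<longleftrightarrow> (\<lambda>_. 0) \<in> msem mumble_next P W' (Build g \<phi> ps S)"
      using False by simp
    also have "\<dots> \<longleftrightarrow> (\<lambda>_. 0) \<in> msem mumble_next P W' (Tr0 (S \<union> {q\<in>set ps. 0 \<in> tsem0 (P q) (stayf (g q))}) g (\<lambda>_. mfalse) \<phi>)"
      by (rule Cons.IH)
    also have "\<dots> \<longleftrightarrow> (\<lambda>_. 0) \<in> msem mumble_next P W' (Tr0 (S \<union> {q\<in>set (p#ps). 0 \<in> tsem0 (P q) (stayf (g q))}) g (\<lambda>_. mfalse) \<phi>)"
      by (simp only: e)
    finally show ?thesis .
  qed
qed



definition gsel :: "('ap, nat \<Rightarrow> 'ap tform set) hform \<Rightarrow> nat \<Rightarrow> 'ap tform set" where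
  "gsel f = (\<lambda>p. if p \<in> hqvars f \<and> mnexts (hbody f) \<noteq> {} then (SOME G. G \<in> mnexts (hbody f)) p else {})"

fun hmap :: "(('ap, 'd1) mform \<Rightarrow> ('ap, 'd2) mform) \<Rightarrow> ('ap, 'd1) hform \<Rightarrow> ('ap, 'd2) hform" where
  "hmap h (HEx p f) = HEx p (hmap h f)"
| "hmap h (HAll p f) = HAll p (hmap h f)"
| "hmap h (HBody a) = HBody (h a)"

lemma hmap_props[simp]: "hbody (hmap h f) = h (hbody f)" "hqvars (hmap h f) = hqvars f"
  by (induction f) auto

lemma finite_hqvars: "finite (hqvars f)"
  by (induction f) auto

lemma hsat_hmap:
  "(\<And>P. ((\<lambda>_. 0) \<in> msem nx2 P (\<lambda>_. {}) (h (hbody f))) = ((\<lambda>_. 0) \<in> msem nx1 P (\<lambda>_. {}) (hbody f))) \<Longrightarrow>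
   hsat nx2 T P (hmap h f) = hsat nx1 T P f"
  by (induction f arbitrary: P) auto

definition transl :: "('ap, nat \<Rightarrow> 'ap tform set) hform \<Rightarrow> ('ap, nat \<Rightarrow> 'ap tform) hform" where
  "transl f = hmap (\<lambda>\<psi>. Build (gsel f) \<psi> (lst (hqvars f)) (- hqvars f)) f"

lemma gsel_base:
  assumes "closed_stut f"
  shows "finite (gsel f p) \<and> (\<forall>e\<in>gsel f p. e \<in> base_stut f)"
proof (cases "p \<in> hqvars f \<and> mnexts (hbody f) \<noteq> {}")
  case True
  define G0 where "G0 = (SOME G. G \<in> mnexts (hbody f))"
  have ex: "\<exists>G. G \<in> mnexts (hbody f)" using True by blast
  have G0: "G0 \<in> mnexts (hbody f)" unfolding G0_def by (rule someI_ex[OF ex])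
  have "gsel f p = G0 p" using True by (simp add: gsel_def G0_def)
  moreover have "finite (G0 p)" using assms G0 True by (auto simp: closed_stut_def)
  moreover have "G0 p \<subseteq> ann_stut f" using G0 True unfolding ann_stut_def by blast
  ultimately show ?thesis by (auto simp: base_stut_def)
next
  case False
  then have "gsel f p = {}" by (auto simp: gsel_def)
  then show ?thesis by simp
qed

lemma gsel_agree:
  assumes "unique_ann f"
  shows "\<forall>G\<in>mnexts (hbody f). \<forall>p\<in>hqvars f. G p = gsel f p"
proof (intro ballI)
  fix G p assume G: "G \<in> mnexts (hbody f)" and p: "p \<in> hqvars f"
  define G0 where "G0 = (SOME G. G \<in> mnexts (hbody f))"
  have ex: "\<exists>G. G \<in> mnexts (hbody f)" using G by blast
  have G0: "G0 \<in> mnexts (hbody f)" unfolding G0_def by (rule someI_ex[OF ex])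
  have "gsel f p = G0 p" using G p by (auto simp: gsel_def G0_def)
  then show "G p = gsel f p" using assms G G0 p unfolding unique_ann_def by metis
qed

lemma body_sem:
  assumes cs: "closed_stut f" and ua: "unique_ann f"
  shows "(\<lambda>_. 0) \<in> msem mumble_next P (\<lambda>_. {}) (Build (gsel f) (hbody f) (lst (hqvars f)) (- hqvars f))
     \<longleftrightarrow> (\<lambda>_. 0) \<in> msem stutter_next P (\<lambda>_. {}) (hbody f)"
proof -
  define Q where "Q = hqvars f"
  define g where "g = gsel f"
  define \<psi> where "\<psi> = hbody f"
  have setq: "set (lst Q) = Q" unfolding Q_def by (rule lst[OF finite_hqvars])
  have base: "\<forall>d\<in>base_stut f. tclosed_wf d" using cs by (simp add: closed_stut_def)
  have gok: "gok g" unfolding gok_def g_def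
    using gsel_base[OF cs] base by (auto simp: tclosed_wf_def)
  have fin: "finite (g p)" "\<forall>e\<in>g p. tfree e = {}" for p using gok by (auto simp: gok_def)
  define S where "S = - Q \<union> {p\<in>set (lst Q). 0 \<in> tsem0 (P p) (stayf (g p))}"
  have 1: "(\<lambda>_. 0) \<in> msem mumble_next P (\<lambda>_. {}) (Build g \<psi> (lst Q) (- Q)) \<longleftrightarrow>
     (\<lambda>_. 0) \<in> msem mumble_next P (\<lambda>_. {}) (Tr0 S g (\<lambda>_. mfalse) \<psi>)"
    unfolding S_def by (rule Build_sem)
  have br: "tmap S g P (\<lambda>_. 0) = stutter_next g P (\<lambda>_. 0)"
  proof (rule ext)
    fix p
    show "tmap S g P (\<lambda>_. 0) p = stutter_next g P (\<lambda>_. 0) p"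
    proof (cases "p \<in> S")
      case True
      have "succ_gamma (P p) 0 (g p) = 1"
      proof (cases "p \<in> Q")
        case True
        then have "0 \<in> tsem0 (P p) (stayf (g p))" using \<open>p \<in> S\<close> setq by (simp add: S_def)
        then show ?thesis using tsem0_stayf[OF fin] by simp
      next
        case False
        then have "g p = {}" by (simp add: g_def gsel_def Q_def)
        then show ?thesis by (simp add: succ_gamma_def)
      qed
      then show ?thesis using True by (simp add: tmap_def stutter_next_def)
    next
      case False
      then have "p \<in> Q" "0 \<notin> tsem0 (P p) (stayf (g p))" using setq by (auto simp: S_def)
      then have "succ_gamma (P p) 0 (g p) \<noteq> 1" using tsem0_stayf[OF fin] by simp
      then have "succ_gamma (P p) 1 (g p) = succ_gamma (P p) 0 (g p)" by (rule nonstay)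
      then show ?thesis using False by (simp add: tmap_def stutter_next_def)
    qed
  qed
  have tests: "\<forall>d\<in>mtests \<psi>. tfree d = {}" using base
    by (auto simp: \<psi>_def base_stut_def tclosed_wf_def)
  have mwf: "mwf \<psi>" and mfr: "mfree \<psi> = {}" and tv: "mtvars \<psi> \<subseteq> Q"
    using cs by (auto simp: closed_stut_def \<psi>_def Q_def)
  have 2: "(\<lambda>_. 0) \<in> msem mumble_next P (\<lambda>_. {}) (Tr0 S g (\<lambda>_. mfalse) \<psi>) \<longleftrightarrow>
     (\<lambda>_. 0) \<in> msem (\<lambda>_. stutter_next g) P (\<lambda>_. {}) \<psi>"
    by (rule Tr0_sem[OF gok br tests mwf]) (use mfr in auto)
  have 3: "msem stutter_next P (\<lambda>_. {}) \<psi> = msem (\<lambda>_. stutter_next g) P (\<lambda>_. {}) \<psi>"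
    using stut_normalize[OF tv mwf, of g "\<lambda>_. {}" P] gsel_agree[OF ua]
    by (auto simp: qinv_def g_def \<psi>_def Q_def)
  show ?thesis using 1 2 3 by (simp add: g_def \<psi>_def Q_def)
qed

lemma main_generic:
  assumes c1: "\<And>d. B d \<Longrightarrow> tclosed_wf d \<Longrightarrow> B (TNext SG d)"
    and c2: "\<And>G d. finite G \<Longrightarrow> \<forall>e\<in>G. B e \<and> tclosed_wf e \<Longrightarrow> B d \<Longrightarrow> tclosed_wf d \<Longrightarrow> B (TNext SG (Lf G d))"
    and c3: "\<And>G. finite G \<Longrightarrow> \<forall>e\<in>G. B e \<and> tclosed_wf e \<Longrightarrow> B (stayf G) \<and> B (Ef G)"
  shows "at_least_as_expressive (frag_mum B) (hmodels mumble_next) (frag_stut B) (hmodels stutter_next)"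
  unfolding at_least_as_expressive_def
proof (intro allI impI)
  fix f :: "('a, nat \<Rightarrow> 'a tform set) hform"
  assume fs: "frag_stut B f"
  have cs: "closed_stut f" and ua: "unique_ann f" and bB: "\<forall>d\<in>base_stut f. B d"
    using fs by (auto simp: frag_stut_def)
  define Q where "Q = hqvars f"
  define g where "g = gsel f"
  define \<psi> where "\<psi> = hbody f"
  define Bp where "Bp = (\<lambda>d. B d \<and> tclosed_wf d)"
  have base: "\<forall>d\<in>base_stut f. tclosed_wf d" using cs by (simp add: closed_stut_def)
  have gB: "finite (g p) \<and> (\<forall>e\<in>g p. Bp e)" for p
    using gsel_base[OF cs, of p] base bB by (auto simp: g_def Bp_def)
  have d1: "Bp d \<Longrightarrow> Bp (TNext SG d)" for d using c1 by (simp add: Bp_def cw_TNext)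
  have d2: "Bp d \<Longrightarrow> Bp (TNext SG (Lf (g p) d))" for d p
    using c2[of "g p" d] gB[of p] by (auto simp: Bp_def cw_TNext cw_Lf)
  have d3: "Bp (stayf (g p))" "Bp (Ef (g p))" for p
    using c3[of "g p"] gB[of p] by (auto simp: Bp_def cw_stayf cw_Ef)
  have setq: "set (lst Q) = Q" unfolding Q_def by (rule lst[OF finite_hqvars])
  have ok: "OKf Bp Q g (Build g \<psi> (lst Q) (- Q))"
  proof (rule Build_OK[where Bp=Bp and g=g, OF d1 d2])
    show "\<forall>p. Bp (stayf (g p))" using d3 by blast
    show "mfree \<psi> = {}" "mwf \<psi>" "mtvars \<psi> \<subseteq> Q" using cs by (auto simp: closed_stut_def \<psi>_def Q_def)
    show "\<forall>d\<in>mtests \<psi>. Bp d" using base bB by (auto simp: \<psi>_def base_stut_def Bp_def)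
    show "set (lst Q) \<subseteq> Q" using setq by simp
  qed
  let ?f' = "transl f"
  have hb: "hbody ?f' = Build g \<psi> (lst Q) (- Q)" by (simp add: transl_def g_def \<psi>_def Q_def)
  have hq: "hqvars ?f' = Q" by (simp add: transl_def Q_def)
  have ann: "ann_mum ?f' \<subseteq> {Ef (g p) | p. True}"
    using ok unfolding ann_mum_def hb OKf_def by auto
  have "frag_mum B ?f'"
  proof -
    have bm: "\<forall>d\<in>base_mum ?f'. Bp d"
      using ok ann d3 unfolding base_mum_def hb OKf_def by auto
    have "closed_mum ?f'"
      using ok bm unfolding closed_mum_def hb hq OKf_def Bp_def by auto
    moreover have "unique_ann ?f'"
    proof -
      have "mnexts (hbody ?f') \<subseteq> {\<lambda>p. Ef (g p)}" using ok hb by (simp add: OKf_def)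
      then show ?thesis unfolding unique_ann_def by blast
    qed
    ultimately show ?thesis using bm by (simp add: frag_mum_def Bp_def)
  qed
  moreover have "hmodels stutter_next T f = hmodels mumble_next T ?f'" for T
    unfolding hmodels_def transl_def
    by (rule hsat_hmap[symmetric]) (rule body_sem[OF cs ua])
  ultimately show "\<exists>f'. frag_mum B f' \<and> (\<forall>T. hmodels stutter_next T f = hmodels mumble_next T f')"
    by blast
qed

theorem lemma6p2:
  shows "at_least_as_expressive
           (frag_mum is_ltl) (hmodels mumble_next)
           (frag_stut is_ltl) (hmodels stutter_next :: ('ap::finite) trace set \<Rightarrow> _ \<Rightarrow> bool)
       \<and> at_least_as_expressive
           (frag_mum (\<lambda>_. True)) (hmodels mumble_next)
           (frag_stut (\<lambda>_. True)) (hmodels stutter_next :: ('ap::finite) trace set \<Rightarrow> _ \<Rightarrow> bool)"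
proof
  show "at_least_as_expressive
           (frag_mum is_ltl) (hmodels mumble_next)
           (frag_stut is_ltl) (hmodels stutter_next :: ('ap::finite) trace set \<Rightarrow> _ \<Rightarrow> bool)"
  proof (rule main_generic)
    show "is_ltl (TNext SG d)" if "is_ltl d" for d using that by (rule is_ltl.intros)
    show "is_ltl (TNext SG (Lf G d))" if "finite G" "\<forall>e\<in>G. is_ltl e \<and> tclosed_wf e" "is_ltl d" for G d
      using that by (auto intro: is_ltl.intros ltl_Lf)
    show "is_ltl (stayf G) \<and> is_ltl (Ef G)" if "finite G" "\<forall>e\<in>G. is_ltl e \<and> tclosed_wf e" for G
      using that by (auto intro: ltl_stayf ltl_Ef)
  qed
  show "at_least_as_expressive
           (frag_mum (\<lambda>_. True)) (hmodels mumble_next)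
           (frag_stut (\<lambda>_. True)) (hmodels stutter_next :: ('ap::finite) trace set \<Rightarrow> _ \<Rightarrow> bool)"
    by (rule main_generic) auto
qed

end
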